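(* Let $N\ge 1$. (a) Let $D^1_N,\ldots,D^N_N\in\mathbb{R}^{3^N}$ be the semi-lexicographic perturbation columns defined in the context. Then the $N\times N$ matrix $M_N$ with $(i,j)$ entry $(D^i_N)^\top D^j_N$ satisfies $M_N = 2\times 3^N\, I_N$, where $I_N$ is the $N\times N$ identity matrix. (b) Let $D^1_N,\ldots,D^N_N\in\mathbb{R}^N$ be the columns of an $N\times N$ permutation matrix. Then the $N\times N$ matrix $M_N$ with $(i,j)$ entry $(D^i_N)^\top D^j_N$ satisfies $M_N = I_N$.
   Context: Semi-lexicographic perturbation columns: set $D^1_1 = (-1,-1,2)^\top\in\mathbb{R}^3$. Given $D^1_k,\ldots,D^k_k\in\mathbb{R}^{3^k}$, define $D^1_{k+1},\ldots,D^{k+1}_{k+1}\in\mathbb{R}^{3^{k+1}}$ by: $D^1_{k+1}$ has its first $2\times 3^k$ entries equal to $-1$ and its remaining $3^k$ entries equal to $2$; and for $i=2,\ldots,k+1$, $D^i_{k+1}$ is the vertical concatenation $(D^{i-1}_k; D^{i-1}_k; D^{i-1}_k)$ of three copies of $D^{i-1}_k$. Applying this recursion $N-1$ times gives $D^1_N,\ldots,D^N_N$. A permutation matrix is a matrix whose rows are the rows of the identity matrix in some order. *)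

theory Defs
  imports Complex_Main
begin

text \<open>Semi-lexicographic perturbation columns. semilex N i is the column D^i_N
  (1-based index i, 1 \<le> i \<le> N), a real vector of length 3^N, represented as a list.
  semilex 0 i = [] is a base that makes semilex (Suc 0) 1 = [-1,-1,2] = D^1_1.\<close>
fun semilex :: "nat \<Rightarrow> nat \<Rightarrow> real list" where
  "semilex 0 i = []"
| "semilex (Suc k) i =
     (if i = 1 then replicate (2 * 3 ^ k) (-1) @ replicate (3 ^ k) 2
      else semilex k (i - 1) @ semilex k (i - 1) @ semilex k (i - 1))"

definition dotl :: "real list \<Rightarrow> real list \<Rightarrow> real" where
  "dotl u v = sum_list (map2 (*) u v)"

definition is_perm_matrix :: "nat \<Rightarrow> (nat \<Rightarrow> nat \<Rightarrow> real) \<Rightarrow> bool" where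
  "is_perm_matrix N P \<longleftrightarrow>
     (\<exists>\<sigma>. bij_betw \<sigma> {..<N} {..<N} \<and>
          (\<forall>r<N. \<forall>c<N. P r c = (if c = \<sigma> r then 1 else 0)))"

end

theory Submission
  imports Defs
begin

lemma len_semilex: "1 \<le> i \<Longrightarrow> i \<le> k \<Longrightarrow> length (semilex k i) = 3 ^ k"
proof (induction k arbitrary: i)
  case 0 then show ?case by simp
next
  case (Suc k) then show ?case by (cases "i = 1") auto
qed

lemma sum_semilex: "1 \<le> i \<Longrightarrow> i \<le> k \<Longrightarrow> sum_list (semilex k i) = 0"
proof (induction k arbitrary: i)
  case 0 then show ?case by simp
next
  case (Suc k) then show ?case by (cases "i = 1") (auto simp: sum_list_replicate)
qed

lemma dotl_app: "length a = length c \<Longrightarrow> dotl (a @ b) (c @ d) = dotl a c + dotl b d"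
  by (simp add: dotl_def)

lemma dotl_rep: "length v = n \<Longrightarrow> dotl (replicate n x) v = x * sum_list v"
proof (induction v arbitrary: n)
  case Nil then show ?case by (simp add: dotl_def)
next
  case (Cons a v) then show ?case by (cases n) (auto simp: dotl_def algebra_simps)
qed

lemma dotl_rep2: "dotl (replicate n x) (replicate n y) = of_nat n * x * y"
  by (simp add: dotl_rep sum_list_replicate)

lemma dotl_comm: "dotl u v = dotl v u"
proof (induction u arbitrary: v)
  case Nil then show ?case by (simp add: dotl_def)
next
  case (Cons a u) then show ?case by (cases v) (auto simp: dotl_def mult.commute)
qed

lemma semilex_dot: "1 \<le> i \<Longrightarrow> i \<le> k \<Longrightarrow> 1 \<le> j \<Longrightarrow> j \<le> k \<Longrightarrow>
   dotl (semilex k i) (semilex k j) = (if i = j then 2 * 3 ^ k else 0)"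
proof (induction k arbitrary: i j)
  case 0 then show ?case by simp
next
  case (Suc k)
  have L: "\<And>m. 1 \<le> m \<Longrightarrow> m \<le> k \<Longrightarrow> length (semilex k m) = 3 ^ k" by (rule len_semilex)
  have S: "\<And>m. 1 \<le> m \<Longrightarrow> m \<le> k \<Longrightarrow> sum_list (semilex k m) = 0" by (rule sum_semilex)
  have one_other: "dotl (semilex (Suc k) 1) (semilex (Suc k) m) = 0" if "2 \<le> m" "m \<le> Suc k" for m
  proof -
    let ?a = "semilex k (m - 1)"
    have la: "length ?a = 3 ^ k" using L that by simp
    have sa: "sum_list ?a = 0" using S that by simp
    have "replicate (2 * 3 ^ k) (-1::real) = replicate (3^k) (-1) @ replicate (3^k) (-1)"
      by (simp add: mult_2 replicate_add)
    then have "dotl (semilex (Suc k) 1) (semilex (Suc k) m) =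
      dotl (replicate (3^k) (-1) @ replicate (3^k) (-1) @ replicate (3^k) 2) (?a @ ?a @ ?a)"
      using that by simp
    also have "\<dots> = 0" using la sa by (simp add: dotl_app dotl_rep)
    finally show ?thesis .
  qed
  show ?case
  proof (cases "i = 1")
    case True
    show ?thesis
    proof (cases "j = 1")
      case True
      have "replicate (2 * 3 ^ k) (-1::real) @ replicate (3^k) 2 = semilex (Suc k) 1" by simp
      then show ?thesis using \<open>i = 1\<close> True
        by (simp add: dotl_app dotl_rep2)
    next
      case False
      then show ?thesis using one_other[of j] Suc.prems \<open>i = 1\<close> by simp
    qed
  next
    case False
    show ?thesis
    proof (cases "j = 1")
      case True
      then show ?thesis using one_other[of i] Suc.prems False dotl_comm by simp
    next
      case F2: False
      have li: "length (semilex k (i - 1)) = 3 ^ k" using L Suc.prems False by simp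
      have lj: "length (semilex k (j - 1)) = 3 ^ k" using L Suc.prems F2 by simp
      have IH: "dotl (semilex k (i - 1)) (semilex k (j - 1)) = (if i - 1 = j - 1 then 2 * 3 ^ k else 0)"
        using Suc.IH[of "i - 1" "j - 1"] Suc.prems False F2 by simp
      have eq: "dotl (semilex (Suc k) i) (semilex (Suc k) j) = 3 * dotl (semilex k (i - 1)) (semilex k (j - 1))"
        using False F2 li lj by (simp add: dotl_app)
      have iff: "(i - 1 = j - 1) = (i = j)" using Suc.prems False F2 by linarith
      show ?thesis unfolding eq IH iff by simp
    qed
  qed
qed

theorem lemma1:
  fixes N :: nat and P :: "nat \<Rightarrow> nat \<Rightarrow> real"
  assumes "N \<ge> 1"
  shows "(\<forall>i\<in>{1..N}. \<forall>j\<in>{1..N}.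
            dotl (semilex N i) (semilex N j) = (if i = j then 2 * 3 ^ N else 0))
         \<and> (is_perm_matrix N P \<longrightarrow>
            (\<forall>i<N. \<forall>j<N. (\<Sum>r<N. P r i * P r j) = (if i = j then 1 else 0)))"
proof (intro conjI impI allI ballI)
  fix i j assume "i \<in> {1..N}" "j \<in> {1..N}"
  then show "dotl (semilex N i) (semilex N j) = (if i = j then 2 * 3 ^ N else 0)"
    by (intro semilex_dot) auto
next
  fix i j assume pm: "is_perm_matrix N P" and ij: "i < N" "j < N"
  obtain \<sigma> where b: "bij_betw \<sigma> {..<N} {..<N}"
    and P: "\<forall>r<N. \<forall>c<N. P r c = (if c = \<sigma> r then 1 else 0)"
    using pm unfolding is_perm_matrix_def by blast
  have "(\<Sum>r<N. P r i * P r j) = (\<Sum>r<N. if \<sigma> r = i \<and> \<sigma> r = j then 1 else 0)"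
    using P ij by (intro sum.cong) auto
  also have "\<dots> = (if i = j then 1 else 0)"
  proof (cases "i = j")
    case True
    have "i \<in> \<sigma> ` {..<N}" using bij_betw_imp_surj_on[OF b] ij(1) by simp
    then obtain r0 where r0: "r0 < N" "\<sigma> r0 = i" by blast
    have inj: "inj_on \<sigma> {..<N}" using b by (rule bij_betw_imp_inj_on)
    have uniq: "\<And>r. r < N \<Longrightarrow> \<sigma> r = i \<Longrightarrow> r = r0"
    proof -
      fix r assume "r < N" "\<sigma> r = i"
      then show "r = r0" using inj r0 inj_onD[of \<sigma> "{..<N}" r r0] by simp
    qed
    have "(\<Sum>r<N. if \<sigma> r = i \<and> \<sigma> r = j then 1 else (0::real)) = (\<Sum>r<N. if r = r0 then 1 else 0)"
      using True r0 by (intro sum.cong refl) (auto dest: uniq)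
    also have "\<dots> = 1" using r0(1) by (simp add: sum.delta)
    finally show ?thesis using True by simp
  next
    case False then show ?thesis by (intro trans[OF sum.neutral]) auto
  qed
  finally show "(\<Sum>r<N. P r i * P r j) = (if i = j then 1 else 0)" .
qed

end
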